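(* Let $f(x)=\operatorname{dist}(x,\mathbb{Z})=\min(x-\lfloor x\rfloor,\ \lfloor x\rfloor+1-x)$ for $x\in\mathbb{R}$. Then $f$ is continuous and $(f(ku+v))_{k\ge1}\in\mathcal{G}$ for all $u>0$ and all $v>0$.
   Context: A sequence of real numbers $(a_k)_{k\ge1}$ is called pointwise good (written $(a_k)\in\mathcal{G}$) if for every measure preserving flow $(U_t)_{t\in\mathbb{R}}$ on a probability space $(X,\mathcal{B},\mu)$ (a measurable action of $\mathbb{R}$ by measure preserving transformations) and every $F\in L^\infty(X,\mu)$, the averages $\frac1n\sum_{k=1}^n F(U_{a_k}x)$ converge for $\mu$-almost every $x$ as $n\to\infty$. *)

theory Defs
  imports "HOL-Probability.Probability"
begin

definition distZ :: "real \<Rightarrow> real" where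
  "distZ x = min (x - real_of_int \<lfloor>x\<rfloor>) (real_of_int \<lfloor>x\<rfloor> + 1 - x)"

definition mp_flow :: "'a measure \<Rightarrow> (real \<Rightarrow> 'a \<Rightarrow> 'a) \<Rightarrow> bool" where
  "mp_flow M U \<longleftrightarrow>
     (\<lambda>(t, x). U t x) \<in> measurable (borel \<Otimes>\<^sub>M M) M \<and>
     (\<forall>x\<in>space M. U 0 x = x) \<and>
     (\<forall>s t. \<forall>x\<in>space M. U (s + t) x = U s (U t x)) \<and>
     (\<forall>t. distr M M (U t) = M)"

definition Linfty :: "'a measure \<Rightarrow> ('a \<Rightarrow> real) set" where
  "Linfty M = {F. F \<in> borel_measurable M \<and> (\<exists>C. AE x in M. \<bar>F x\<bar> \<le> C)}"

text \<open>Since a free type variable in a theorem is universally quantified, a theorem stating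
  pointwise_good TYPE('a) a for arbitrary 'a expresses membership in the class G.\<close>
definition pointwise_good :: "'a itself \<Rightarrow> (nat \<Rightarrow> real) \<Rightarrow> bool" where
  "pointwise_good _ a \<longleftrightarrow>
     (\<forall>(M :: 'a measure) U F. prob_space M \<and> mp_flow M U \<and> F \<in> Linfty M \<longrightarrow>
        (AE x in M. convergent (\<lambda>n. (1 / real n) * (\<Sum>k=1..n. F (U (a k) x)))))"

end

theory Submission
  imports Defs
begin


definition Ssum :: "('b \<Rightarrow> 'b) \<Rightarrow> ('b \<Rightarrow> real) \<Rightarrow> nat \<Rightarrow> 'b \<Rightarrow> real" where
  "Ssum T h n y = (\<Sum>k<n. h ((T^^k) y))"

lemma funpow_measurable: "T \<in> measurable N N \<Longrightarrow> (T^^k) \<in> measurable N N"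
  by (induction k) (auto simp: funpow_Suc_right intro: measurable_comp)

lemma funpow_space: "T \<in> measurable N N \<Longrightarrow> y \<in> space N \<Longrightarrow> (T^^k) y \<in> space N"
  by (rule measurable_space[OF funpow_measurable])

lemma Ssum_0[simp]: "Ssum T h 0 y = 0" by (simp add: Ssum_def)

lemma Ssum_Suc_shift: "Ssum T h (Suc n) y = h y + Ssum T h n (T y)"
  unfolding Ssum_def by (subst sum.lessThan_Suc_shift) (simp add: funpow_Suc_right del: funpow.simps)

lemma Ssum_measurable[measurable]:
  assumes "T \<in> measurable N N" "h \<in> borel_measurable N"
  shows "Ssum T h n \<in> borel_measurable N"
proof -
  have "(\<lambda>y. h ((T^^k) y)) \<in> borel_measurable N" for k
    using measurable_comp[OF funpow_measurable[OF assms(1)] assms(2)] by (simp add: comp_def)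
  then show ?thesis unfolding Ssum_def by (intro borel_measurable_sum) auto
qed

lemma Ssum_bound:
  assumes "T \<in> measurable N N" "\<forall>y\<in>space N. \<bar>h y\<bar> \<le> B" "y \<in> space N"
  shows "\<bar>Ssum T h n y\<bar> \<le> real n * B"
proof -
  have "\<bar>Ssum T h n y\<bar> \<le> (\<Sum>k<n. \<bar>h ((T^^k) y)\<bar>)" unfolding Ssum_def by (rule sum_abs)
  also have "\<dots> \<le> (\<Sum>k<n. B)" using assms(2) funpow_space[OF assms(1,3)] by (intro sum_mono) blast
  finally show ?thesis by simp
qed

lemma maximal_ergodic:
  assumes N: "prob_space N" and T: "T \<in> measurable N N" "distr N N T = N"
    and h: "h \<in> borel_measurable N" "\<forall>y\<in>space N. \<bar>h y\<bar> \<le> B"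
  shows "0 \<le> (\<integral>y. h y * indicator {y\<in>space N. \<exists>n. 0 < Ssum T h n y} y \<partial>N)"
proof -
  interpret prob_space N by fact
  define M where "M n y = Max ((\<lambda>k. Ssum T h k y) ` {..n})" for n y
  have M_ge: "Ssum T h k y \<le> M n y" if "k \<le> n" for k n y
    unfolding M_def using that by (intro Max_ge) auto
  have M_nonneg: "0 \<le> M n y" for n y using M_ge[of 0 n y] by simp
  have M_in: "\<exists>k\<le>n. M n y = Ssum T h k y" for n y
  proof -
    have "M n y \<in> (\<lambda>k. Ssum T h k y) ` {..n}" unfolding M_def by (intro Max_in) auto
    then show ?thesis by auto
  qed
  have M_meas[measurable]: "M n \<in> borel_measurable N" for n
    unfolding M_def using Ssum_measurable[OF T(1) h(1)] by (intro borel_measurable_Max) auto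
  have M_bound: "\<bar>M n y\<bar> \<le> real n * \<bar>B\<bar>" if "y \<in> space N" for n y
  proof -
    obtain k where k: "k \<le> n" "M n y = Ssum T h k y" using M_in by blast
    have B0: "0 \<le> B" using h(2) that by (meson abs_ge_zero order_trans)
    have "\<bar>Ssum T h k y\<bar> \<le> real k * B" using Ssum_bound[OF T(1) h(2) that] .
    also have "\<dots> \<le> real n * \<bar>B\<bar>" using k(1) B0 by (intro mult_mono) auto
    finally show ?thesis using k by simp
  qed
  have Ty: "T y \<in> space N" if "y \<in> space N" for y by (rule measurable_space[OF T(1) that])
  define E where "E n = {y\<in>space N. 0 < M n y}" for n
  have E_meas[measurable]: "E n \<in> sets N" for n unfolding E_def by measurable
  have key: "M n y - M n (T y) \<le> h y * indicator (E n) y" if y: "y \<in> space N" for n y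
  proof (cases "0 < M n y")
    case True
    obtain k where k: "k \<le> n" "M n y = Ssum T h k y" using M_in by blast
    have "k \<noteq> 0"
    proof
      assume "k = 0"
      with k True show False by simp
    qed
    then obtain j where j: "k = Suc j" by (cases k) auto
    have "M n y = h y + Ssum T h j (T y)" using k j Ssum_Suc_shift by simp
    also have "\<dots> \<le> h y + M n (T y)" using M_ge[of j n "T y"] k j by simp
    finally show ?thesis using True y by (simp add: E_def)
  next
    case False
    then have "M n y = 0" using M_nonneg[of n y] by simp
    then show ?thesis using M_nonneg[of n "T y"] by (simp add: E_def indicator_def)
  qed
  have MT_meas: "(\<lambda>y. M n (T y)) \<in> borel_measurable N" for n
    using measurable_comp[OF T(1) M_meas] by (simp add: comp_def)
  have intM: "integrable N (M n)" for n
    by (intro integrable_const_bound[where B="real n * \<bar>B\<bar>"] AE_I2 M_meas) (simp add: M_bound)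
  have intMT: "integrable N (\<lambda>y. M n (T y))" for n
    by (intro integrable_const_bound[where B="real n * \<bar>B\<bar>"] AE_I2 MT_meas) (simp add: M_bound Ty)
  have hI_meas: "(\<lambda>y. h y * indicator A y) \<in> borel_measurable N" if "A \<in> sets N" for A
    using h(1) that by (intro borel_measurable_times borel_measurable_indicator) auto
  have inth: "integrable N (\<lambda>y. h y * indicator A y)" if "A \<in> sets N" for A
  proof (intro integrable_const_bound[where B="\<bar>B\<bar>"] AE_I2 hI_meas that)
    fix y assume "y \<in> space N"
    then show "norm (h y * indicator A y) \<le> \<bar>B\<bar>" using h(2) by (auto simp: indicator_def)
  qed
  have step: "0 \<le> (\<integral>y. h y * indicator (E n) y \<partial>N)" for n
  proof -
    have "(\<integral>y. M n (T y) \<partial>N) = (\<integral>y. M n y \<partial>distr N N T)"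
      by (rule integral_distr[symmetric]) (auto simp: T(1))
    also have "\<dots> = (\<integral>y. M n y \<partial>N)" using T(2) by simp
    finally have eq: "(\<integral>y. M n (T y) \<partial>N) = (\<integral>y. M n y \<partial>N)" .
    have "0 = (\<integral>y. M n y - M n (T y) \<partial>N)"
      using eq intM intMT by (simp add: Bochner_Integration.integral_diff)
    also have "\<dots> \<le> (\<integral>y. h y * indicator (E n) y \<partial>N)"
      using key by (intro integral_mono Bochner_Integration.integrable_diff intM intMT inth E_meas) auto
    finally show ?thesis .
  qed
  define E' where "E' = {y\<in>space N. \<exists>n. 0 < Ssum T h n y}"
  have E'_meas[measurable]: "E' \<in> sets N"
    unfolding E'_def using Ssum_measurable[OF T(1) h(1)] by measurable
  have lim: "(\<lambda>n. \<integral>y. h y * indicator (E n) y \<partial>N) \<longlonglongrightarrow> (\<integral>y. h y * indicator E' y \<partial>N)"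
  proof (rule integral_dominated_convergence[where w="\<lambda>_. \<bar>B\<bar>"])
    show "(\<lambda>y. h y * indicator E' y) \<in> borel_measurable N" by (rule hI_meas) simp
    show "(\<lambda>y. h y * indicator (E n) y) \<in> borel_measurable N" for n by (rule hI_meas) simp
    show "integrable N (\<lambda>_. \<bar>B\<bar>)" by simp
    show "AE y in N. norm (h y * indicator (E n) y) \<le> \<bar>B\<bar>" for n
      using h(2) by (auto intro!: AE_I2 simp: indicator_def)
    show "AE y in N. (\<lambda>n. h y * indicator (E n) y) \<longlonglongrightarrow> h y * indicator E' y"
    proof (rule AE_I2)
      fix y assume y: "y \<in> space N"
      show "(\<lambda>n. h y * indicator (E n) y) \<longlonglongrightarrow> h y * indicator E' y"
      proof (cases "y \<in> E'")
        case True
        then obtain n0 where n0: "0 < Ssum T h n0 y" unfolding E'_def by auto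
        have "eventually (\<lambda>n. h y * indicator (E n) y = h y * indicator E' y) sequentially"
          unfolding eventually_sequentially
        proof (intro exI allI impI)
          fix n assume "n0 \<le> n"
          then have "0 < M n y" using M_ge[of n0 n y] n0 by simp
          then show "h y * indicator (E n) y = h y * indicator E' y" using True y by (simp add: E_def)
        qed
        then show ?thesis by (rule tendsto_eventually)
      next
        case False
        have "\<not> 0 < M n y" for n
          using M_in[of n y] False y unfolding E'_def by auto
        then have "h y * indicator (E n) y = h y * indicator E' y" for n
          using False by (simp add: E_def indicator_def)
        then have "(\<lambda>n. h y * indicator (E n) y) = (\<lambda>n. h y * indicator E' y)" by (rule ext)
        then show ?thesis by simp
      qed
    qed
  qed
  have "0 \<le> (\<integral>y. h y * indicator E' y \<partial>N)"
    using step by (intro LIMSEQ_le_const[OF lim]) auto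
  then show ?thesis by (simp add: E'_def)
qed




definition Vfreq :: "real \<Rightarrow> (nat \<Rightarrow> real) \<Rightarrow> bool" where
  "Vfreq c X \<longleftrightarrow> (\<exists>m::nat. \<forall>K. \<exists>n\<ge>K. c + 1 / (real m + 1) < X n)"

lemma small_eventually:
  fixes C :: real and m :: nat
  assumes "0 \<le> C"
  shows "\<exists>K0. \<forall>n\<ge>K0. C / real n < 1 / (2 * (real m + 1))"
proof -
  obtain K0 :: nat where K0: "2 * C * (real m + 1) < real K0" using reals_Archimedean2 by blast
  have "C / real n < 1 / (2 * (real m + 1))" if "n \<ge> K0" "n \<ge> 1" for n
  proof -
    have "2 * C * (real m + 1) < real n" using K0 that by linarith
    then show ?thesis using that by (simp add: field_simps)
  qed
  then show ?thesis by (intro exI[of _ "max K0 1"]) auto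
qed

lemma Vfreq_shift:
  assumes H: "\<forall>n\<ge>1. \<bar>X n - Y (Suc n)\<bar> \<le> C / real n"
  shows "Vfreq c X \<longleftrightarrow> Vfreq c Y"
proof -
  have C0: "0 \<le> C" using H[rule_format, of 1] by simp
  have half: "c + 1 / (real m + 1) - 1 / (2 * (real m + 1)) = c + 1 / (real (2*m+1) + 1)" for m
  proof -
    have e: "real (2*m+1) + 1 = 2 * (real m + 1)" by simp
    define t where "t = 1 / (2 * (real m + 1))"
    have "1 / (real m + 1) = 2 * t" unfolding t_def by (simp add: field_simps)
    then show ?thesis unfolding e t_def[symmetric] by simp
  qed
  show ?thesis
  proof
    assume "Vfreq c X"
    then obtain m where m: "\<forall>K. \<exists>n\<ge>K. c + 1 / (real m + 1) < X n" unfolding Vfreq_def by blast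
    obtain K0 where K0: "\<forall>n\<ge>K0. C / real n < 1 / (2 * (real m + 1))" using small_eventually[OF C0] by blast
    have "\<forall>K. \<exists>n\<ge>K. c + 1 / (real (2*m+1) + 1) < Y n"
    proof
      fix K
      obtain n where n: "n \<ge> max K (max K0 1)" "c + 1 / (real m + 1) < X n" using m by blast
      have "\<bar>X n - Y (Suc n)\<bar> \<le> C / real n" using H n by auto
      moreover have "C / real n < 1 / (2 * (real m + 1))" using K0 n by auto
      ultimately have "c + 1 / (real (2*m+1) + 1) < Y (Suc n)" using n(2) half[of m] by linarith
      then show "\<exists>n\<ge>K. c + 1 / (real (2*m+1) + 1) < Y n" using n by (intro exI[of _ "Suc n"]) auto
    qed
    then show "Vfreq c Y" unfolding Vfreq_def by blast
  next
    assume "Vfreq c Y"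
    then obtain m where m: "\<forall>K. \<exists>n\<ge>K. c + 1 / (real m + 1) < Y n" unfolding Vfreq_def by blast
    obtain K0 where K0: "\<forall>n\<ge>K0. C / real n < 1 / (2 * (real m + 1))" using small_eventually[OF C0] by blast
    have "\<forall>K. \<exists>n\<ge>K. c + 1 / (real (2*m+1) + 1) < X n"
    proof
      fix K
      obtain n where n: "n \<ge> Suc (max K (max K0 1))" "c + 1 / (real m + 1) < Y n" using m by blast
      then obtain n' where n': "n = Suc n'" by (cases n) auto
      have "\<bar>X n' - Y (Suc n')\<bar> \<le> C / real n'" using H n n' by auto
      moreover have "C / real n' < 1 / (2 * (real m + 1))" using K0 n n' by auto
      ultimately have "c + 1 / (real (2*m+1) + 1) < X n'" using n(2)[unfolded n'] half[of m] by linarith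
      then show "\<exists>n\<ge>K. c + 1 / (real (2*m+1) + 1) < X n" using n n' by (intro exI[of _ n']) auto
    qed
    then show "Vfreq c X" unfolding Vfreq_def by blast
  qed
qed

lemma osc:
  fixes X :: "nat \<Rightarrow> real"
  assumes B: "\<forall>n. \<bar>X n\<bar> \<le> B" and nc: "\<not> convergent X"
  shows "\<exists>a\<in>\<rat>. \<exists>b\<in>\<rat>. a < b \<and> Vfreq b X \<and> Vfreq (-a) (\<lambda>n. - X n)"
proof -
  have Bx: "-B \<le> X n" "X n \<le> B" for n using B[rule_format, of n] by auto
  define l where "l = Liminf sequentially (\<lambda>n. ereal (X n))"
  define L where "L = Limsup sequentially (\<lambda>n. ereal (X n))"
  have lb: "ereal (-B) \<le> l" unfolding l_def
    by (rule Liminf_bounded) (use Bx in \<open>auto intro!: always_eventually\<close>)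
  have Lb: "L \<le> ereal B" unfolding L_def
    by (rule Limsup_bounded) (use Bx in \<open>auto intro!: always_eventually\<close>)
  have lL: "l \<le> L" unfolding l_def L_def by (rule Liminf_le_Limsup) simp
  obtain p where p: "l = ereal p" using lb lL Lb by (cases l) auto
  obtain q where q: "L = ereal q" using lb lL Lb by (cases L) auto
  have "p \<noteq> q"
  proof
    assume "p = q"
    then have "(\<lambda>n. ereal (X n)) \<longlonglongrightarrow> ereal p"
      using p q l_def L_def by (intro Liminf_eq_Limsup) auto
    then have "X \<longlonglongrightarrow> p" by simp
    then show False using nc by (auto simp: convergent_def)
  qed
  then have pq: "p < q" using lL p q by simp
  obtain a where a: "a \<in> \<rat>" "p < a" "a < (p+q)/2" using Rats_dense_in_real[of p "(p+q)/2"] pq by auto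
  obtain b where b: "b \<in> \<rat>" "(p+q)/2 < b" "b < q" using Rats_dense_in_real[of "(p+q)/2" q] pq by auto
  have "0 < q - b" using b by simp
  then obtain m1 :: nat where "inverse (real (Suc m1)) < q - b" using reals_Archimedean by blast
  then have m1: "1 / (real m1 + 1) < q - b" by (simp add: inverse_eq_divide add.commute)
  have "0 < a - p" using a by simp
  then obtain m2 :: nat where "inverse (real (Suc m2)) < a - p" using reals_Archimedean by blast
  then have m2: "1 / (real m2 + 1) < a - p" by (simp add: inverse_eq_divide add.commute)
  have "\<forall>K. \<exists>n\<ge>K. b + 1 / (real m1 + 1) < X n"
  proof (rule allI, rule ccontr)
    fix K assume K: "\<not> (\<exists>n\<ge>K. b + 1 / (real m1 + 1) < X n)"
    have "\<forall>n\<ge>K. ereal (X n) \<le> ereal (b + 1 / (real m1 + 1))"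
      using K by (auto simp: not_less)
    then have "eventually (\<lambda>n. ereal (X n) \<le> ereal (b + 1 / (real m1 + 1))) sequentially"
      unfolding eventually_sequentially by blast
    then have "L \<le> ereal (b + 1 / (real m1 + 1))" unfolding L_def by (rule Limsup_bounded)
    then show False using q m1 by simp
  qed
  then have "Vfreq b X" unfolding Vfreq_def by blast
  have "\<forall>K. \<exists>n\<ge>K. - a + 1 / (real m2 + 1) < - X n"
  proof (rule allI, rule ccontr)
    fix K assume K: "\<not> (\<exists>n\<ge>K. - a + 1 / (real m2 + 1) < - X n)"
    have "\<forall>n\<ge>K. ereal (a - 1 / (real m2 + 1)) \<le> ereal (X n)"
      using K by (auto simp: not_less)
    then have "eventually (\<lambda>n. ereal (a - 1 / (real m2 + 1)) \<le> ereal (X n)) sequentially"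
      unfolding eventually_sequentially by blast
    then have "ereal (a - 1 / (real m2 + 1)) \<le> l" unfolding l_def by (rule Liminf_bounded)
    then show False using p m2 by simp
  qed
  then have "Vfreq (-a) (\<lambda>n. - X n)" unfolding Vfreq_def by blast
  moreover have "a < b" using a b by simp
  ultimately show ?thesis using a(1) b(1) \<open>Vfreq b X\<close> by blast
qed




lemma birkhoff_bounded:
  assumes N: "prob_space N" and T: "T \<in> measurable N N" "distr N N T = N"
    and g: "g \<in> borel_measurable N" "\<forall>y\<in>space N. \<bar>g y\<bar> \<le> B"
  shows "AE y in N. convergent (\<lambda>n. Ssum T g n y / real n)"
proof -
  interpret prob_space N by fact
  define A where "A n y = Ssum T g n y / real n" for n y
  have A_meas[measurable]: "A n \<in> borel_measurable N" for n
    unfolding A_def using Ssum_measurable[OF T(1) g(1)] by measurable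
  have Ty: "T y \<in> space N" if "y \<in> space N" for y by (rule measurable_space[OF T(1) that])
  have A_bound: "\<bar>A n y\<bar> \<le> B" if y: "y \<in> space N" for n y
  proof (cases "n = 0")
    case True
    have "0 \<le> B" using g(2) y by (meson abs_ge_zero order_trans)
    then show ?thesis using True by (simp add: A_def)
  next
    case False
    have S: "\<bar>Ssum T g n y\<bar> \<le> real n * B" by (rule Ssum_bound[OF T(1) g(2) y])
    have "\<bar>A n y\<bar> = \<bar>Ssum T g n y\<bar> / real n" by (simp add: A_def abs_divide)
    also have "\<dots> \<le> real n * B / real n" by (intro divide_right_mono) (use S in auto)
    also have "\<dots> = B" using False by simp
    finally show ?thesis .
  qed
  have A_shift: "\<bar>A n (T y) - A (Suc n) y\<bar> \<le> 2 * B / real n" if y: "y \<in> space N" and n: "n \<ge> 1" for n y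
  proof -
    define S where "S = Ssum T g n (T y)"
    have S: "\<bar>S\<bar> \<le> real n * B" unfolding S_def by (rule Ssum_bound[OF T(1) g(2) Ty[OF y]])
    have gy: "\<bar>g y\<bar> \<le> B" using g(2) y by blast
    have eq: "A n (T y) - A (Suc n) y = (S - real n * g y) / (real n * (real n + 1))"
      using n by (simp add: A_def Ssum_Suc_shift S_def field_simps)
    have num: "\<bar>S - real n * g y\<bar> \<le> 2 * real n * B"
    proof -
      have "\<bar>real n * g y\<bar> \<le> real n * B" using gy by (simp add: abs_mult mult_left_mono)
      then show ?thesis using S by linarith
    qed
    have "\<bar>A n (T y) - A (Suc n) y\<bar> = \<bar>S - real n * g y\<bar> / (real n * (real n + 1))"
      unfolding eq by (simp add: abs_div_pos)
    also have "\<dots> \<le> 2 * real n * B / (real n * (real n + 1))"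
      using num by (intro divide_right_mono) auto
    also have "\<dots> = (real n * (2 * B)) / (real n * (real n + 1))" by (simp add: algebra_simps)
    also have "\<dots> = 2 * B / (real n + 1)" using n by (subst mult_divide_mult_cancel_left) auto
    also have "\<dots> \<le> 2 * B / real n"
    proof -
      have "0 \<le> B" using gy by linarith
      then show ?thesis using n by (intro divide_left_mono) auto
    qed
    finally show ?thesis .
  qed
  define D where "D a b = {y \<in> space N. Vfreq b (\<lambda>n. A n y) \<and> Vfreq (-a) (\<lambda>n. - A n y)}" for a b
  have D_inv: "T y \<in> D a b \<longleftrightarrow> y \<in> D a b" if y: "y \<in> space N" for y a b
  proof -
    have "Vfreq b (\<lambda>n. A n (T y)) \<longleftrightarrow> Vfreq b (\<lambda>n. A n y)"
      by (rule Vfreq_shift[where C="2*B"]) (use A_shift y in auto)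
    moreover have "Vfreq (-a) (\<lambda>n. - A n (T y)) \<longleftrightarrow> Vfreq (-a) (\<lambda>n. - A n y)"
    proof (rule Vfreq_shift[where C="2*B"], intro allI impI)
      fix n :: nat assume "n \<ge> 1"
      then show "\<bar>- A n (T y) - - A (Suc n) y\<bar> \<le> 2 * B / real n"
        using A_shift[OF y, of n] by (simp add: abs_minus_commute)
    qed
    ultimately show ?thesis using y Ty[OF y] unfolding D_def by auto
  qed
  have D_inv_pow: "(T^^k) y \<in> D a b \<longleftrightarrow> y \<in> D a b" if y: "y \<in> space N" for y a b k
    using y
  proof (induction k arbitrary: y)
    case 0
    then show ?case by simp
  next
    case (Suc k)
    have "(T^^Suc k) y = (T^^k) (T y)" by (simp add: funpow_Suc_right del: funpow.simps)
    then show ?case using Suc.IH[OF Ty[OF Suc.prems]] D_inv[OF Suc.prems] by simp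
  qed
  have D_meas[measurable]: "D a b \<in> sets N" for a b
    unfolding D_def Vfreq_def by measurable
  have D_null: "emeasure N (D a b) = 0" if ab: "a < b" for a b
  proof -
    let ?D = "D a b"
    have Ssum_ind: "Ssum T (\<lambda>y. f y * indicator ?D y) n y = indicator ?D y * Ssum T f n y"
      if y: "y \<in> space N" for f n y
      unfolding Ssum_def using D_inv_pow[OF y]
      by (simp add: sum_distrib_left indicator_def mult.commute)
    have Ssum_lin: "Ssum T (\<lambda>y. c1 * g y + c0) n y = c1 * Ssum T g n y + real n * c0" for c1 c0 n y
      unfolding Ssum_def by (simp add: sum.distrib sum_distrib_left)
    have SA: "Ssum T g n y = real n * A n y" if "n \<ge> 1" for n y
      using that by (simp add: A_def)
    have int_g: "integrable N (\<lambda>y. (c1 * g y + c0) * indicator ?D y)" for c1 c0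
    proof (intro integrable_const_bound[where B="\<bar>c1\<bar> * \<bar>B\<bar> + \<bar>c0\<bar>"] AE_I2)
      show "(\<lambda>y. (c1 * g y + c0) * indicator ?D y) \<in> borel_measurable N" using g(1) by measurable
      fix y assume y: "y \<in> space N"
      have "\<bar>c1 * g y\<bar> \<le> \<bar>c1\<bar> * \<bar>B\<bar>"
        using g(2) y by (auto simp: abs_mult intro!: mult_left_mono)
      then show "norm ((c1 * g y + c0) * indicator ?D y) \<le> \<bar>c1\<bar> * \<bar>B\<bar> + \<bar>c0\<bar>"
        by (auto simp: indicator_def)
    qed
    have max_lemma: "0 \<le> (\<integral>y. (c1 * g y + c0) * indicator ?D y \<partial>N)"
      if pos: "\<And>y. y \<in> ?D \<Longrightarrow> \<exists>n. 0 < c1 * Ssum T g n y + real n * c0" for c1 c0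
    proof -
      let ?h = "\<lambda>y. (c1 * g y + c0) * indicator ?D y"
      have hm: "?h \<in> borel_measurable N" using g(1) by measurable
      have hb: "\<forall>y\<in>space N. \<bar>?h y\<bar> \<le> \<bar>c1\<bar> * \<bar>B\<bar> + \<bar>c0\<bar>"
      proof
        fix y assume y: "y \<in> space N"
        have "\<bar>c1 * g y\<bar> \<le> \<bar>c1\<bar> * \<bar>B\<bar>"
          using g(2) y by (auto simp: abs_mult intro!: mult_left_mono)
        then show "\<bar>?h y\<bar> \<le> \<bar>c1\<bar> * \<bar>B\<bar> + \<bar>c0\<bar>" by (auto simp: indicator_def)
      qed
      have set_eq: "{y\<in>space N. \<exists>n. 0 < Ssum T ?h n y} = ?D"
      proof (intro set_eqI iffI)
        fix y assume "y \<in> {y\<in>space N. \<exists>n. 0 < Ssum T ?h n y}"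
        then obtain n where y: "y \<in> space N" and n: "0 < Ssum T ?h n y" by auto
        have "Ssum T ?h n y = indicator ?D y * Ssum T (\<lambda>y. c1 * g y + c0) n y"
          using Ssum_ind[OF y, of "\<lambda>y. c1 * g y + c0"] by simp
        with n show "y \<in> ?D" by (cases "y \<in> ?D") auto
      next
        fix y assume yD: "y \<in> ?D"
        then have y: "y \<in> space N" unfolding D_def by auto
        obtain n where n: "0 < c1 * Ssum T g n y + real n * c0" using pos[OF yD] by blast
        have "Ssum T ?h n y = c1 * Ssum T g n y + real n * c0"
          using Ssum_ind[OF y, of "\<lambda>y. c1 * g y + c0"] yD Ssum_lin by simp
        with n have "0 < Ssum T ?h n y" by simp
        with y show "y \<in> {y\<in>space N. \<exists>n. 0 < Ssum T ?h n y}" by blast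
      qed
      have "0 \<le> (\<integral>y. ?h y * indicator {y\<in>space N. \<exists>n. 0 < Ssum T ?h n y} y \<partial>N)"
        by (rule maximal_ergodic[OF N T hm hb])
      also have "\<dots> = (\<integral>y. ?h y \<partial>N)"
        unfolding set_eq by (intro Bochner_Integration.integral_cong) (auto simp: indicator_def)
      finally show ?thesis .
    qed
    have I1: "0 \<le> (\<integral>y. (1 * g y + (-b)) * indicator ?D y \<partial>N)"
    proof (rule max_lemma)
      fix y assume yD: "y \<in> ?D"
      then obtain m where m: "\<forall>K. \<exists>n\<ge>K. b + 1 / (real m + 1) < A n y"
        unfolding D_def Vfreq_def by blast
      then obtain n where n: "n \<ge> 1" "b + 1 / (real m + 1) < A n y" by blast
      have "b < A n y" using n(2) by (smt (verit) divide_pos_pos of_nat_0_le_iff)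
      then have "real n * b < real n * A n y" using n(1) by simp
      then show "\<exists>n. 0 < 1 * Ssum T g n y + real n * (-b)"
        using SA[OF n(1)] by (intro exI[of _ n]) simp
    qed
    have I2: "0 \<le> (\<integral>y. ((-1) * g y + a) * indicator ?D y \<partial>N)"
    proof (rule max_lemma)
      fix y assume yD: "y \<in> ?D"
      then obtain m where m: "\<forall>K. \<exists>n\<ge>K. -a + 1 / (real m + 1) < - A n y"
        unfolding D_def Vfreq_def by blast
      then obtain n where n: "n \<ge> 1" "-a + 1 / (real m + 1) < - A n y" by blast
      have "A n y < a" using n(2) by (smt (verit) divide_pos_pos of_nat_0_le_iff)
      then have "real n * A n y < real n * a" using n(1) by simp
      then show "\<exists>n. 0 < (-1) * Ssum T g n y + real n * a"
        using SA[OF n(1)] by (intro exI[of _ n]) simp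
    qed
    have "(\<integral>y. (1 * g y + (-b)) * indicator ?D y \<partial>N) + (\<integral>y. ((-1) * g y + a) * indicator ?D y \<partial>N)
        = (\<integral>y. (1 * g y + (-b)) * indicator ?D y + ((-1) * g y + a) * indicator ?D y \<partial>N)"
      by (rule Bochner_Integration.integral_add[symmetric]) (rule int_g)+
    also have "\<dots> = (\<integral>y. (a - b) * indicator ?D y \<partial>N)"
      by (intro Bochner_Integration.integral_cong) (auto simp: algebra_simps)
    also have "\<dots> = (a - b) * measure N ?D" by simp
    finally have "0 \<le> (a - b) * measure N ?D" using I1 I2 by linarith
    then have "measure N ?D \<le> 0" using ab by (smt (verit, best) mult_neg_pos measure_nonneg)
    then have "measure N ?D = 0" using measure_nonneg[of N ?D] by linarith
    then show ?thesis by (simp add: emeasure_eq_measure)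
  qed
  have "AE y in N. \<forall>a\<in>\<rat>. \<forall>b\<in>\<rat>. a < b \<longrightarrow> y \<notin> D a b"
  proof (subst AE_ball_countable[OF countable_rat], intro ballI)
    fix a assume "a \<in> (\<rat>::real set)"
    show "AE y in N. \<forall>b\<in>\<rat>. a < b \<longrightarrow> y \<notin> D a b"
    proof (subst AE_ball_countable[OF countable_rat], intro ballI)
      fix b assume "b \<in> (\<rat>::real set)"
      show "AE y in N. a < b \<longrightarrow> y \<notin> D a b"
      proof (cases "a < b")
        case True
        then have "D a b \<in> null_sets N" using D_null D_meas by (simp add: null_sets_def)
        from AE_not_in[OF this] show ?thesis by (rule eventually_mono) simp
      qed simp
    qed
  qed
  then show ?thesis
  proof (rule AE_mp[OF _ AE_I2[OF impI]])
    fix y assume y: "y \<in> space N" and H: "\<forall>a\<in>\<rat>. \<forall>b\<in>\<rat>. a < b \<longrightarrow> y \<notin> D a b"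
    show "convergent (\<lambda>n. Ssum T g n y / real n)"
    proof (rule ccontr)
      assume nc: "\<not> convergent (\<lambda>n. Ssum T g n y / real n)"
      have Bd: "\<forall>n. \<bar>A n y\<bar> \<le> B" using A_bound[OF y] by simp
      have nc': "\<not> convergent (\<lambda>n. A n y)" using nc by (simp add: A_def)
      obtain a b where ab: "a \<in> \<rat>" "b \<in> \<rat>" "a < b"
        "Vfreq b (\<lambda>n. A n y)" "Vfreq (-a) (\<lambda>n. - A n y)" using osc[OF Bd nc'] by auto
      have "y \<in> D a b" using ab y unfolding D_def by simp
      then show False using H ab(1,2,3) by simp
    qed
  qed
qed




definition Lm :: "real measure" where "Lm = uniform_measure lborel {0..<1}"

lemma emeasure_lborel_unit: "emeasure lborel {0::real..<1} = 1" by simp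

lemma Lm_prob: "prob_space Lm"
  unfolding Lm_def by (rule prob_space_uniform_measure) simp_all

lemma sets_Lm[simp, measurable_cong]: "sets Lm = sets borel"
  by (simp add: Lm_def)

lemma space_Lm[simp]: "space Lm = UNIV"
  by (simp add: Lm_def)

lemma emeasure_Lm: "A \<in> sets borel \<Longrightarrow> emeasure Lm A = emeasure lborel ({0..<1} \<inter> A)"
  unfolding Lm_def by (subst emeasure_uniform_measure) (auto simp: divide_ennreal_def)

lemma frac_borel[measurable]: "(frac :: real \<Rightarrow> real) \<in> borel_measurable borel"
proof -
  have "frac = (\<lambda>x::real. x - real_of_int \<lfloor>x\<rfloor>)" by (rule ext) (simp add: frac_def)
  moreover have "(\<lambda>x::real. x - real_of_int \<lfloor>x\<rfloor>) \<in> borel_measurable borel"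
    using borel_measurable_real_floor by (intro borel_measurable_diff) auto
  ultimately show ?thesis by simp
qed

lemma lborel_translate:
  assumes "B \<in> sets borel"
  shows "emeasure lborel ((\<lambda>s::real. t + s) -` B) = emeasure lborel B"
proof -
  have "emeasure lborel B = emeasure (distr lborel borel ((+) t)) B" by (simp add: lborel_distr_plus)
  also have "\<dots> = emeasure lborel ((+) t -` B \<inter> space lborel)" using assms by (subst emeasure_distr) auto
  finally show ?thesis by simp
qed

lemma rot_preserves: "distr Lm Lm (\<lambda>s. frac (s + u)) = Lm"
proof (rule measure_eqI)
  show "sets (distr Lm Lm (\<lambda>s. frac (s + u))) = sets Lm" by simp
  fix A assume "A \<in> sets (distr Lm Lm (\<lambda>s. frac (s + u)))"
  then have A: "A \<in> sets borel" by simp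
  define c where "c = frac u"
  have c: "0 \<le> c" "c < 1" unfolding c_def by (simp_all add: frac_lt_1)
  have R: "frac (s + u) = (if s + c < 1 then s + c else s + c - 1)" if "0 \<le> s" "s < 1" for s
  proof -
    have "frac (s + u) = frac (s + c)" unfolding c_def by simp
    also have "\<dots> = (if s + c < 1 then s + c else s + c - 1)"
    proof (cases "s + c < 1")
      case True then show ?thesis using that c by (simp add: frac_eq)
    next
      case False
      then have "frac (s + c - 1 + 1) = s + c - 1" using that c by (subst frac_1_eq) (simp add: frac_eq)
      then show ?thesis using False by simp
    qed
    finally show ?thesis .
  qed
  have meas: "(\<lambda>s. frac (s + u)) \<in> measurable Lm Lm" by measurable
  have "emeasure (distr Lm Lm (\<lambda>s. frac (s + u))) A = emeasure Lm ((\<lambda>s. frac (s + u)) -` A \<inter> space Lm)"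
    by (rule emeasure_distr[OF meas]) (simp add: A)
  also have "\<dots> = emeasure Lm ((\<lambda>s. frac (s + u)) -` A)" by simp
  also have "\<dots> = emeasure lborel ({0..<1} \<inter> (\<lambda>s. frac (s + u)) -` A)"
    using A meas by (intro emeasure_Lm) (use measurable_sets[OF meas, of A] in simp)
  also have "{0..<1} \<inter> (\<lambda>s. frac (s + u)) -` A =
      (\<lambda>s. c + s) -` (A \<inter> {c..<1}) \<union> (\<lambda>s. (c - 1) + s) -` (A \<inter> {0..<c})"
    using R c by (auto split: if_splits simp: algebra_simps)
  also have "emeasure lborel \<dots> = emeasure lborel ((\<lambda>s. c + s) -` (A \<inter> {c..<1}))
      + emeasure lborel ((\<lambda>s. (c - 1) + s) -` (A \<inter> {0..<c}))"
  proof (rule plus_emeasure[symmetric])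
    have pm: "(\<lambda>s. t + s) \<in> measurable lborel borel" for t :: real by measurable
    show "(\<lambda>s. c + s) -` (A \<inter> {c..<1}) \<in> sets lborel"
      using measurable_sets[OF pm, of "A \<inter> {c..<1}" c] A by simp
    show "(\<lambda>s. (c - 1) + s) -` (A \<inter> {0..<c}) \<in> sets lborel"
      using measurable_sets[OF pm, of "A \<inter> {0..<c}" "c - 1"] A by simp
    show "(\<lambda>s. c + s) -` (A \<inter> {c..<1}) \<inter> (\<lambda>s. (c - 1) + s) -` (A \<inter> {0..<c}) = {}" by auto
  qed
  also have "\<dots> = emeasure lborel (A \<inter> {c..<1}) + emeasure lborel (A \<inter> {0..<c})"
    using lborel_translate[of "A \<inter> {c..<1}" c] lborel_translate[of "A \<inter> {0..<c}" "c - 1"] A by simp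
  also have "\<dots> = emeasure lborel (A \<inter> {c..<1} \<union> A \<inter> {0..<c})"
    using A by (intro plus_emeasure) auto
  also have "A \<inter> {c..<1} \<union> A \<inter> {0..<c} = {0..<1} \<inter> A" using c by auto
  also have "emeasure lborel \<dots> = emeasure Lm A" using A by (simp add: emeasure_Lm)
  finally show "emeasure (distr Lm Lm (\<lambda>s. frac (s + u))) A = emeasure Lm A" .
qed




lemma rot_birkhoff:
  fixes M :: "'a measure"
  assumes M: "prob_space M"
    and K[measurable]: "(\<lambda>(r, x). K r x) \<in> borel_measurable (borel \<Otimes>\<^sub>M M)"
    and Kb: "\<forall>r. \<forall>x\<in>space M. \<bar>K r x\<bar> \<le> B"
  shows "AE s in Lm. AE x in M. convergent (\<lambda>n. (\<Sum>k<n. K (frac (s + real (Suc k) * u)) x) / real n)"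
proof -
  have pps: "pair_prob_space Lm M"
    by (simp add: pair_prob_space_def pair_sigma_finite_def Lm_prob M prob_space_imp_sigma_finite)
  interpret LM: pair_prob_space Lm M by (rule pps)
  define TY where "TY = (\<lambda>y :: real \<times> 'a. (frac (fst y + u), snd y))"
  define g where "g = (\<lambda>y :: real \<times> 'a. K (frac (fst y + u)) (snd y))"
  have TYm: "TY \<in> measurable (Lm \<Otimes>\<^sub>M M) (Lm \<Otimes>\<^sub>M M)" unfolding TY_def by measurable
  have gm: "g \<in> borel_measurable (Lm \<Otimes>\<^sub>M M)" unfolding g_def by measurable
  have gb: "\<forall>y\<in>space (Lm \<Otimes>\<^sub>M M). \<bar>g y\<bar> \<le> B"
    using Kb by (auto simp: g_def space_pair_measure)
  have "distr Lm Lm (\<lambda>s. frac (s + u)) \<Otimes>\<^sub>M distr M M (\<lambda>x. x)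
      = distr (Lm \<Otimes>\<^sub>M M) (Lm \<Otimes>\<^sub>M M) (\<lambda>(x, y). (frac (x + u), y))"
    by (rule pair_measure_distr) (auto simp: M prob_space_imp_sigma_finite)
  then have TYd: "distr (Lm \<Otimes>\<^sub>M M) (Lm \<Otimes>\<^sub>M M) TY = Lm \<Otimes>\<^sub>M M"
    unfolding rot_preserves distr_id TY_def by (simp add: case_prod_beta')
  have prob: "prob_space (Lm \<Otimes>\<^sub>M M)" by (rule prob_space_pair[OF Lm_prob M])
  have iter: "snd ((TY^^k) y) = snd y \<and> frac (fst ((TY^^k) y) + u) = frac (fst y + real (Suc k) * u)" for k y
  proof (induction k)
    case 0 then show ?case by simp
  next
    case (Suc k)
    have "frac (fst ((TY^^Suc k) y) + u) = frac (frac (fst ((TY^^k) y) + u) + u)"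
      by (simp add: TY_def)
    also have "\<dots> = frac (frac (fst y + real (Suc k) * u) + u)" using Suc by simp
    also have "\<dots> = frac (fst y + real (Suc (Suc k)) * u)" by (simp add: algebra_simps)
    finally have A: "frac (fst ((TY^^Suc k) y) + u) = frac (fst y + real (Suc (Suc k)) * u)" .
    have "snd ((TY^^Suc k) y) = snd y" using Suc by (simp add: TY_def)
    with A show ?case by blast
  qed
  have Ss: "Ssum TY g n (s, x) = (\<Sum>k<n. K (frac (s + real (Suc k) * u)) x)" for n s x
    unfolding Ssum_def g_def using iter[of _ "(s, x)"] by (intro sum.cong) auto
  have "AE y in Lm \<Otimes>\<^sub>M M. convergent (\<lambda>n. Ssum TY g n y / real n)"
    by (rule birkhoff_bounded[OF prob TYm TYd gm gb])
  then have "AE y in Lm \<Otimes>\<^sub>M M. convergent (\<lambda>n. (\<Sum>k<n. K (frac (fst y + real (Suc k) * u)) (snd y)) / real n)"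
    by (rule AE_mp) (rule AE_I2, auto simp: Ss)
  from LM.AE_pair[OF this] show ?thesis by simp
qed




lemma distZ_le: "distZ x \<le> \<bar>x - real_of_int m\<bar>"
proof -
  have "m \<le> \<lfloor>x\<rfloor> \<or> m \<ge> \<lfloor>x\<rfloor> + 1" by linarith
  then show ?thesis
  proof
    assume "m \<le> \<lfloor>x\<rfloor>"
    then have "real_of_int m \<le> real_of_int \<lfloor>x\<rfloor>" by simp
    have "distZ x \<le> x - real_of_int \<lfloor>x\<rfloor>" unfolding distZ_def by simp
    then show ?thesis using \<open>real_of_int m \<le> real_of_int \<lfloor>x\<rfloor>\<close> of_int_floor_le[of x] by linarith
  next
    assume "m \<ge> \<lfloor>x\<rfloor> + 1"
    then have "real_of_int m \<ge> real_of_int \<lfloor>x\<rfloor> + 1" by linarith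
    have "distZ x \<le> real_of_int \<lfloor>x\<rfloor> + 1 - x" unfolding distZ_def by simp
    then show ?thesis using \<open>real_of_int m \<ge> real_of_int \<lfloor>x\<rfloor> + 1\<close> real_of_int_floor_add_one_gt[of x] by linarith
  qed
qed

lemma distZ_pos: "x \<notin> \<int> \<Longrightarrow> 0 < distZ x"
proof -
  assume x: "x \<notin> \<int>"
  have "real_of_int \<lfloor>x\<rfloor> \<noteq> x" using x by (metis Ints_of_int)
  then have "real_of_int \<lfloor>x\<rfloor> < x" using of_int_floor_le[of x] by linarith
  moreover have "x < real_of_int \<lfloor>x\<rfloor> + 1" by linarith
  ultimately show ?thesis unfolding distZ_def by simp
qed

lemma finite_pos_min:
  assumes "finite W" "\<forall>w\<in>W. (0::real) < f w"
  shows "\<exists>\<delta>>0. \<forall>w\<in>W. \<delta> \<le> f w"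
  using assms
proof (induction W rule: finite_induct)
  case empty then show ?case by (intro exI[of _ 1]) simp
next
  case (insert w W)
  then obtain \<delta> where "\<delta> > 0" "\<forall>w\<in>W. \<delta> \<le> f w" by auto
  then show ?case using insert.prems by (intro exI[of _ "min \<delta> (f w)"]) auto
qed

lemma sep_card:
  fixes L :: nat
  assumes L: "L \<ge> 1"
  shows "S \<subseteq> {1..n} \<Longrightarrow> (\<forall>i\<in>S. \<forall>j\<in>S. i < j \<longrightarrow> i + L \<le> j) \<Longrightarrow> real (card S) \<le> real n / real L + 1"
proof (induction n arbitrary: S rule: less_induct)
  case (less n)
  have fin: "finite S" using less.prems(1) finite_subset by blast
  have nn: "0 \<le> real n / real L" by simp
  show ?case
  proof (cases "n \<in> S")
    case False
    show ?thesis
    proof (cases n)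
      case 0
      then have "S = {}" using less.prems(1) by auto
      then show ?thesis by simp
    next
      case (Suc n')
      have "S \<subseteq> {1..n'}" using less.prems(1) False Suc by (auto simp: le_Suc_eq)
      then have "real (card S) \<le> real n' / real L + 1" using less.IH[of n' S] less.prems(2) Suc by auto
      also have "\<dots> \<le> real n / real L + 1" using Suc L by (simp add: divide_right_mono)
      finally show ?thesis .
    qed
  next
    case True
    define S' where "S' = S - {n}"
    have cS: "card S = Suc (card S')" unfolding S'_def by (rule card.remove[OF fin True])
    have S'le: "i + L \<le> n" if "i \<in> S'" for i
    proof -
      have "i \<in> S" "i \<noteq> n" using that by (auto simp: S'_def)
      moreover have "i \<le> n" using \<open>i \<in> S\<close> less.prems(1) by auto
      ultimately show ?thesis using less.prems(2) True by auto
    qed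
    show ?thesis
    proof (cases "n \<le> L")
      case True
      then have "S' = {}" using S'le L less.prems(1) unfolding S'_def by fastforce
      then show ?thesis using cS nn by simp
    next
      case False
      have sub: "S' \<subseteq> {1..n - L}" using S'le less.prems(1) unfolding S'_def by fastforce
      have sep: "\<forall>i\<in>S'. \<forall>j\<in>S'. i < j \<longrightarrow> i + L \<le> j" using less.prems(2) unfolding S'_def by auto
      have "real (card S') \<le> real (n - L) / real L + 1"
        using less.IH[OF _ sub sep] False L by auto
      also have "\<dots> = real n / real L" using False L by (simp add: of_nat_diff field_simps)
      finally show ?thesis using cS by simp
    qed
  qed
qed

lemma density:
  fixes u v c :: real and L :: nat
  assumes L: "L \<ge> 1"
  shows "\<exists>\<delta>0>0. \<forall>\<delta>. 0 < \<delta> \<and> \<delta> < \<delta>0 \<longrightarrow> (\<forall>n. real (card {k\<in>{1..n}. c - \<delta> \<le> frac (real k * u + v) \<and> frac (real k * u + v) < c}) \<le> real n / real L + 1)"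
proof (cases "\<exists>q\<ge>1. real q * u \<in> \<int>")
  case True
  then obtain q :: nat where q: "q \<ge> 1" "real q * u \<in> \<int>" by blast
  define \<theta> where "\<theta> k = frac (real k * u + v)" for k :: nat
  have per: "\<theta> (k + q) = \<theta> k" for k
  proof -
    have eq: "real (k + q) * u + v = (real k * u + v) + real q * u" by (simp add: algebra_simps)
    show ?thesis unfolding \<theta>_def eq by (rule frac_add_int_right[OF q(2)])
  qed
  define V where "V = \<theta> ` {1..q}"
  have inV: "k \<ge> 1 \<Longrightarrow> \<theta> k \<in> V" for k
  proof (induction k rule: less_induct)
    case (less k)
    show ?case
    proof (cases "k \<le> q")
      case True then show ?thesis using less.prems unfolding V_def by auto
    next
      case False
      then have "\<theta> k = \<theta> (k - q)" using per[of "k - q"] by simp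
      moreover have "\<theta> (k - q) \<in> V" using less.IH[of "k - q"] False q(1) by auto
      ultimately show ?thesis by simp
    qed
  qed
  obtain \<delta>0 where d0: "\<delta>0 > 0" "\<forall>w\<in>{w\<in>V. w < c}. \<delta>0 \<le> c - w"
    using finite_pos_min[of "{w\<in>V. w < c}" "\<lambda>w. c - w"] unfolding V_def by auto
  have "real (card {k\<in>{1..n}. c - \<delta> \<le> \<theta> k \<and> \<theta> k < c}) \<le> real n / real L + 1"
    if "0 < \<delta>" "\<delta> < \<delta>0" for \<delta> n
  proof -
    have E: "{k\<in>{1..n}. c - \<delta> \<le> \<theta> k \<and> \<theta> k < c} = {}"
    proof (rule ccontr)
      assume "{k\<in>{1..n}. c - \<delta> \<le> \<theta> k \<and> \<theta> k < c} \<noteq> {}"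
      then obtain k where k: "k \<ge> 1" "c - \<delta> \<le> \<theta> k" "\<theta> k < c" by auto
      then have "\<delta>0 \<le> c - \<theta> k" using d0 inV[OF k(1)] by auto
      then show False using k that by linarith
    qed
    show ?thesis unfolding E by simp
  qed
  then show ?thesis using d0(1) unfolding \<theta>_def by blast
next
  case False
  define \<theta> where "\<theta> k = frac (real k * u + v)" for k :: nat
  obtain \<delta>0 where d0: "\<delta>0 > 0" "\<forall>j\<in>{1..<L}. \<delta>0 \<le> distZ (real j * u)"
    using finite_pos_min[of "{1..<L}" "\<lambda>j. distZ (real j * u)"] False distZ_pos by force
  have "real (card {k\<in>{1..n}. c - \<delta> \<le> \<theta> k \<and> \<theta> k < c}) \<le> real n / real L + 1"
    if d: "0 < \<delta>" "\<delta> < \<delta>0" for \<delta> n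
  proof (rule sep_card[OF L])
    show "{k\<in>{1..n}. c - \<delta> \<le> \<theta> k \<and> \<theta> k < c} \<subseteq> {1..n}" by auto
    show "\<forall>i\<in>{k\<in>{1..n}. c - \<delta> \<le> \<theta> k \<and> \<theta> k < c}. \<forall>j\<in>{k\<in>{1..n}. c - \<delta> \<le> \<theta> k \<and> \<theta> k < c}.
            i < j \<longrightarrow> i + L \<le> j"
    proof (intro ballI impI)
      fix i j assume i: "i \<in> {k\<in>{1..n}. c - \<delta> \<le> \<theta> k \<and> \<theta> k < c}" and j: "j \<in> {k\<in>{1..n}. c - \<delta> \<le> \<theta> k \<and> \<theta> k < c}"
        and ij: "i < j"
      define m where "m = \<lfloor>real j * u + v\<rfloor> - \<lfloor>real i * u + v\<rfloor>"
      have "real (j - i) * u - real_of_int m = \<theta> j - \<theta> i"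
        using ij unfolding m_def \<theta>_def frac_def by (simp add: of_nat_diff algebra_simps)
      moreover have "\<bar>\<theta> j - \<theta> i\<bar> < \<delta>" using i j by auto
      ultimately have "distZ (real (j - i) * u) < \<delta>" using distZ_le[of "real (j - i) * u" m] by linarith
      then have "\<not> (j - i \<in> {1..<L})" using d0 d by force
      then show "i + L \<le> j" using ij by auto
    qed
  qed
  then show ?thesis using d0(1) unfolding \<theta>_def by blast
qed

lemma approx_conv:
  fixes c :: "nat \<Rightarrow> real"
  assumes C: "0 \<le> C"
    and H: "\<forall>L::nat. L \<ge> 1 \<longrightarrow> (\<exists>d. convergent d \<and> (\<forall>n\<ge>1. \<bar>c n - d n\<bar> \<le> C / real L + C / real n))"
  shows "convergent c"
proof -
  have "Cauchy c"
  proof (rule CauchyI)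
    fix e :: real assume e: "0 < e"
    obtain L :: nat where L: "C / real L < e / 6" "L \<ge> 1"
    proof -
      obtain L0 :: nat where "6 * C / e < real L0" using reals_Archimedean2 by blast
      then have "C / real (Suc L0) < e / 6" using e C by (simp add: field_simps)
      then show ?thesis using that[of "Suc L0"] by simp
    qed
    obtain d where d: "convergent d" "\<forall>n\<ge>1. \<bar>c n - d n\<bar> \<le> C / real L + C / real n" using H L(2) by blast
    have "Cauchy d" using d(1) by (simp add: convergent_Cauchy)
    then obtain M1 where M1: "\<forall>m\<ge>M1. \<forall>n\<ge>M1. norm (d m - d n) < e / 6"
      using e by (metis CauchyD divide_pos_pos zero_less_numeral)
    obtain M2 :: nat where M2: "6 * C / e < real M2" using reals_Archimedean2 by blast
    show "\<exists>M. \<forall>m\<ge>M. \<forall>n\<ge>M. norm (c m - c n) < e"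
    proof (intro exI[of _ "max 1 (max M1 (Suc M2))"] allI impI)
      fix m n assume m: "max 1 (max M1 (Suc M2)) \<le> m" and n: "max 1 (max M1 (Suc M2)) \<le> n"
      have Cm: "C / real m < e / 6"
      proof -
        have "6 * C / e < real m" using M2 m by simp
        then show ?thesis using e m by (simp add: field_simps)
      qed
      have Cn: "C / real n < e / 6"
      proof -
        have "6 * C / e < real n" using M2 n by simp
        then show ?thesis using e n by (simp add: field_simps)
      qed
      have "\<bar>c m - d m\<bar> \<le> C / real L + C / real m" using d(2) m by simp
      moreover have "\<bar>c n - d n\<bar> \<le> C / real L + C / real n" using d(2) n by simp
      moreover have "\<bar>d m - d n\<bar> < e / 6" using M1 m n by simp
      ultimately have "\<bar>c m - c n\<bar> < e" using L(1) Cm Cn by linarith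
      then show "norm (c m - c n) < e" by simp
    qed
  qed
  then show ?thesis by (simp add: Cauchy_convergent_iff)
qed




lemma AE_exists_in:
  assumes "AE s in N. P s" "A \<in> sets N" "emeasure N A \<noteq> 0"
  shows "\<exists>s\<in>A. P s"
proof (rule ccontr)
  assume H: "\<not> (\<exists>s\<in>A. P s)"
  obtain Z where Z: "Z \<in> sets N" "emeasure N Z = 0" "{s\<in>space N. \<not> P s} \<subseteq> Z"
    using assms(1) by (auto elim!: AE_E)
  have "A \<subseteq> Z" using H Z(3) sets.sets_into_space[OF assms(2)] by auto
  then have "emeasure N A \<le> emeasure N Z" using Z(1) by (rule emeasure_mono)
  then show False using Z(2) assms(3) by simp
qed

lemma sum_shift1: "(\<Sum>k<n. f (Suc k)) = (\<Sum>k=1..n. f k)"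
  by (induction n) (simp_all add: atLeastAtMostSuc_conv add.commute)

lemma sum_indicator_card:
  "(\<Sum>k\<in>A. (if P k then (1::real) else 0)) = real (card {k\<in>A. P k})" if "finite A"
  using that by (simp add: sum.inter_filter[symmetric])

lemma flow_meas:
  assumes "mp_flow M U"
  shows "U t \<in> measurable M M"
proof -
  have [measurable]: "(\<lambda>(t, x). U t x) \<in> measurable (borel \<Otimes>\<^sub>M M) M" using assms by (simp add: mp_flow_def)
  show ?thesis by measurable
qed

lemma good_piece:
  fixes M :: "'a measure" and F :: "'a \<Rightarrow> real"
  assumes M: "prob_space M" and U: "mp_flow M U" and F[measurable]: "F \<in> borel_measurable M"
    and Fb: "\<forall>x\<in>space M. \<bar>F x\<bar> \<le> B"
  shows "AE x in M. convergent (\<lambda>n. 1 / real n * (\<Sum>k=1..n. F (U (frac (real k * u + v)) x) * indicator {a..<b} (frac (real k * u + v))))"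
proof -
  interpret prob_space M by fact
  have Um[measurable]: "(\<lambda>(t, x). U t x) \<in> measurable (borel \<Otimes>\<^sub>M M) M" using U by (simp add: mp_flow_def)
  have Uadd: "U (s + t) x = U s (U t x)" if "x \<in> space M" for s t x using U that by (simp add: mp_flow_def)
  have Ud: "distr M M (U t) = M" for t using U by (simp add: mp_flow_def)
  have Utm: "U t \<in> measurable M M" for t by (rule flow_meas[OF U])
  have Us: "U t x \<in> space M" if "x \<in> space M" for t x by (rule measurable_space[OF Utm that])
  define B' where "B' = \<bar>B\<bar>"
  have B'0: "0 \<le> B'" by (simp add: B'_def)
  have Fb': "\<bar>F x\<bar> \<le> B'" if "x \<in> space M" for x using Fb that unfolding B'_def by force
  define K where "K r x = F (U r x) * indicator {a..<b} r" for r x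
  have Km: "(\<lambda>(r, x). K r x) \<in> borel_measurable (borel \<Otimes>\<^sub>M M)" unfolding K_def by measurable
  have Kb: "\<forall>r. \<forall>x\<in>space M. \<bar>K r x\<bar> \<le> B'"
    using Fb' Us B'0 by (auto simp: K_def indicator_def)
  have rb: "AE s in Lm. AE x in M. convergent (\<lambda>n. (\<Sum>k<n. K (frac (s + real (Suc k) * u)) x) / real n)"
    by (rule rot_birkhoff[OF M Km Kb])
  define \<theta> where "\<theta> k = frac (real k * u + v)" for k :: nat
  define c where "c n z = 1 / real n * (\<Sum>k=1..n. K (\<theta> k) z)" for n z
  have main: "AE z in M. \<exists>d. convergent d \<and> (\<forall>n\<ge>1. \<bar>c n z - d n\<bar> \<le> (6 * B') / real L + (6 * B') / real n)"
    if L: "L \<ge> 1" for L :: nat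
  proof -
    obtain da where da: "da > 0" "\<forall>\<delta>. 0 < \<delta> \<and> \<delta> < da \<longrightarrow> (\<forall>n. real (card {k\<in>{1..n}. a - \<delta> \<le> \<theta> k \<and> \<theta> k < a}) \<le> real n / real L + 1)"
      using density[OF L, of a u v] unfolding \<theta>_def by blast
    obtain db where db: "db > 0" "\<forall>\<delta>. 0 < \<delta> \<and> \<delta> < db \<longrightarrow> (\<forall>n. real (card {k\<in>{1..n}. b - \<delta> \<le> \<theta> k \<and> \<theta> k < b}) \<le> real n / real L + 1)"
      using density[OF L, of b u v] unfolding \<theta>_def by blast
    obtain d1 where d1: "d1 > 0" "\<forall>\<delta>. 0 < \<delta> \<and> \<delta> < d1 \<longrightarrow> (\<forall>n. real (card {k\<in>{1..n}. 1 - \<delta> \<le> \<theta> k \<and> \<theta> k < 1}) \<le> real n / real L + 1)"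
      using density[OF L, of 1 u v] unfolding \<theta>_def by blast
    define v0 where "v0 = frac v"
    have v0: "0 \<le> v0" "v0 < 1" unfolding v0_def by (simp_all add: frac_lt_1)
    define \<epsilon> where "\<epsilon> = min (min da db) (min d1 (1 - v0))"
    have \<epsilon>: "0 < \<epsilon>" "\<epsilon> \<le> da" "\<epsilon> \<le> db" "\<epsilon> \<le> d1" "v0 + \<epsilon> \<le> 1"
      using da db d1 v0 unfolding \<epsilon>_def by auto
    have "emeasure Lm {v0<..<v0+\<epsilon>} = emeasure lborel ({0..<1} \<inter> {v0<..<v0+\<epsilon>})"
      by (rule emeasure_Lm) simp
    also have "{0..<1} \<inter> {v0<..<v0+\<epsilon>} = {v0<..<v0+\<epsilon>}" using v0 \<epsilon> by auto
    also have "emeasure lborel {v0<..<v0+\<epsilon>} = ennreal \<epsilon>" using \<epsilon> by simp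
    finally have pos: "emeasure Lm {v0<..<v0+\<epsilon>} \<noteq> 0" using \<epsilon> by simp
    have "\<exists>s\<in>{v0<..<v0+\<epsilon>}. AE x in M. convergent (\<lambda>n. (\<Sum>k<n. K (frac (s + real (Suc k) * u)) x) / real n)"
      by (rule AE_exists_in[OF rb _ pos]) simp
    then obtain s where s: "s \<in> {v0<..<v0+\<epsilon>}"
      and conv: "AE x in M. convergent (\<lambda>n. (\<Sum>k<n. K (frac (s + real (Suc k) * u)) x) / real n)"
      by blast
    define \<delta> where "\<delta> = s - v0"
    have \<delta>: "0 < \<delta>" "\<delta> < da" "\<delta> < db" "\<delta> < d1" using s \<epsilon> unfolding \<delta>_def by auto
    have "AE z in M. convergent (\<lambda>n. (\<Sum>k<n. K (frac (s + real (Suc k) * u)) (U (-\<delta>) z)) / real n)"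
    proof (rule AE_distrD[OF Utm])
      show "AE x in distr M M (U (-\<delta>)). convergent (\<lambda>n. (\<Sum>k<n. K (frac (s + real (Suc k) * u)) x) / real n)"
        unfolding Ud by (rule conv)
    qed
    then show ?thesis
    proof (rule AE_mp[OF _ AE_I2[OF impI]])
      fix z assume z: "z \<in> space M"
        and cz: "convergent (\<lambda>n. (\<Sum>k<n. K (frac (s + real (Suc k) * u)) (U (-\<delta>) z)) / real n)"
      define x where "x = U (-\<delta>) z"
      have x: "x \<in> space M" unfolding x_def by (rule Us[OF z])
      define d where "d n = (\<Sum>k<n. K (frac (s + real (Suc k) * u)) x) / real n" for n
      define J where "J t \<longleftrightarrow> (a - \<delta> \<le> t \<and> t < a) \<or> (b - \<delta> \<le> t \<and> t < b) \<or> (1 - \<delta> \<le> t \<and> t < 1)" for t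
      have trm: "\<bar>K (\<theta> k) z - K (frac (s + real k * u)) x\<bar> \<le> 2 * B' * (if J (\<theta> k) then 1 else 0)" for k
      proof -
        have th: "0 \<le> \<theta> k" "\<theta> k < 1" unfolding \<theta>_def by (simp_all add: frac_lt_1)
        have fr: "frac (s + real k * u) = frac (\<theta> k + \<delta>)"
        proof -
          have "frac (s + real k * u) = frac (frac v + (\<delta> + real k * u))"
            unfolding \<delta>_def v0_def by (simp add: algebra_simps)
          also have "\<dots> = frac (v + (\<delta> + real k * u))" by (rule frac_add_simps(1))
          also have "\<dots> = frac (frac (real k * u + v) + \<delta>)" by (simp add: algebra_simps)
          finally show ?thesis unfolding \<theta>_def .
        qed
        have Kz: "\<bar>K r z\<bar> \<le> B'" "\<bar>K r x\<bar> \<le> B'" for r using Kb z x by auto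
        show ?thesis
        proof (cases "J (\<theta> k)")
          case True
          then show ?thesis using Kz[of "\<theta> k"] Kz[of "frac (s + real k * u)"] by simp
        next
          case False
          then have lt: "\<theta> k + \<delta> < 1" unfolding J_def using th by auto
          then have "frac (\<theta> k + \<delta>) = \<theta> k + \<delta>" using th \<delta> by (simp add: frac_eq)
          then have e1: "frac (s + real k * u) = \<theta> k + \<delta>" using fr by simp
          have "U (\<theta> k + \<delta>) x = U (\<theta> k + \<delta> + - \<delta>) z" unfolding x_def by (rule Uadd[OF z, symmetric])
          then have e2: "U (\<theta> k + \<delta>) x = U (\<theta> k) z" by simp
          have ind: "indicator {a..<b} (\<theta> k + \<delta>) = (indicator {a..<b} (\<theta> k) :: real)"
            using False \<delta> unfolding J_def by (auto simp: indicator_def)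
          have "K (frac (s + real k * u)) x = K (\<theta> k) z" unfolding K_def e1 e2 ind ..
          then show ?thesis using B'0 by simp
        qed
      qed
      have bound: "\<bar>c n z - d n\<bar> \<le> (6 * B') / real L + (6 * B') / real n" if n: "n \<ge> 1" for n
      proof -
        have dn: "d n = 1 / real n * (\<Sum>k=1..n. K (frac (s + real k * u)) x)"
          unfolding d_def sum_shift1[of "\<lambda>k. K (frac (s + real k * u)) x" n] by simp
        have "c n z - d n = 1 / real n * (\<Sum>k=1..n. K (\<theta> k) z - K (frac (s + real k * u)) x)"
          unfolding c_def dn sum_subtractf right_diff_distrib ..
        then have "\<bar>c n z - d n\<bar> = 1 / real n * \<bar>\<Sum>k=1..n. K (\<theta> k) z - K (frac (s + real k * u)) x\<bar>"
          by (simp add: abs_mult)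
        also have "\<dots> \<le> 1 / real n * (\<Sum>k=1..n. 2 * B' * (if J (\<theta> k) then 1 else 0))"
          by (intro mult_left_mono order.trans[OF sum_abs] sum_mono trm) simp
        also have "(\<Sum>k=1..n. 2 * B' * (if J (\<theta> k) then 1 else 0)) = 2 * B' * real (card {k\<in>{1..n}. J (\<theta> k)})"
          by (simp add: sum_distrib_left[symmetric] sum_indicator_card)
        also have "real (card {k\<in>{1..n}. J (\<theta> k)}) \<le> 3 * (real n / real L + 1)"
        proof -
          let ?Ha = "{k\<in>{1..n}. a - \<delta> \<le> \<theta> k \<and> \<theta> k < a}"
          let ?Hb = "{k\<in>{1..n}. b - \<delta> \<le> \<theta> k \<and> \<theta> k < b}"
          let ?H1 = "{k\<in>{1..n}. 1 - \<delta> \<le> \<theta> k \<and> \<theta> k < 1}"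
          have "{k\<in>{1..n}. J (\<theta> k)} = ?Ha \<union> ?Hb \<union> ?H1" unfolding J_def by auto
          then have "card {k\<in>{1..n}. J (\<theta> k)} \<le> card ?Ha + card ?Hb + card ?H1"
            by (metis (no_types, lifting) card_Un_le add_le_mono1 order_trans)
          then have "real (card {k\<in>{1..n}. J (\<theta> k)}) \<le> real (card ?Ha) + real (card ?Hb) + real (card ?H1)"
            by linarith
          moreover have "real (card ?Ha) \<le> real n / real L + 1" using da(2) \<delta> by blast
          moreover have "real (card ?Hb) \<le> real n / real L + 1" using db(2) \<delta> by blast
          moreover have "real (card ?H1) \<le> real n / real L + 1" using d1(2) \<delta> by blast
          moreover have "3 * (real n / real L + 1) = (real n / real L + 1) + (real n / real L + 1) + (real n / real L + 1)"
            by simp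
          ultimately show ?thesis by linarith
        qed
        then have "1 / real n * (2 * B' * real (card {k\<in>{1..n}. J (\<theta> k)})) \<le> 1 / real n * (2 * B' * (3 * (real n / real L + 1)))"
          using B'0 by (intro mult_left_mono) auto
        also have "\<dots> = (6 * B') / real L + (6 * B') / real n" using n by (simp add: field_simps)
        finally show ?thesis by simp
      qed
      have "convergent d" using cz unfolding d_def x_def .
      then show "\<exists>d. convergent d \<and> (\<forall>n\<ge>1. \<bar>c n z - d n\<bar> \<le> (6 * B') / real L + (6 * B') / real n)"
        using bound by blast
    qed
  qed
  have "AE z in M. \<forall>L::nat. L \<ge> 1 \<longrightarrow> (\<exists>d. convergent d \<and> (\<forall>n\<ge>1. \<bar>c n z - d n\<bar> \<le> (6 * B') / real L + (6 * B') / real n))"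
    unfolding AE_all_countable
  proof
    fix L :: nat
    show "AE z in M. L \<ge> 1 \<longrightarrow> (\<exists>d. convergent d \<and> (\<forall>n\<ge>1. \<bar>c n z - d n\<bar> \<le> (6 * B') / real L + (6 * B') / real n))"
    proof (cases "L \<ge> 1")
      case True then show ?thesis using main[OF True] by simp
    qed simp
  qed
  then have "AE z in M. convergent (\<lambda>n. c n z)"
    by (rule AE_mp) (rule AE_I2, intro impI approx_conv[of "6 * B'"], use B'0 in auto)
  then show ?thesis unfolding c_def K_def \<theta>_def by simp
qed




lemma distZ_attained: "\<exists>m. distZ y = \<bar>y - real_of_int m\<bar>"
proof (cases "y - real_of_int \<lfloor>y\<rfloor> \<le> real_of_int \<lfloor>y\<rfloor> + 1 - y")
  case True
  then have "distZ y = \<bar>y - real_of_int \<lfloor>y\<rfloor>\<bar>" unfolding distZ_def by simp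
  then show ?thesis by blast
next
  case False
  then have "distZ y = \<bar>y - real_of_int (\<lfloor>y\<rfloor> + 1)\<bar>" unfolding distZ_def by simp
  then show ?thesis by blast
qed

lemma distZ_lip: "\<bar>distZ x - distZ y\<bar> \<le> \<bar>x - y\<bar>"
proof -
  have half: "distZ x \<le> distZ y + \<bar>x - y\<bar>" for x y
  proof -
    obtain m where m: "distZ y = \<bar>y - real_of_int m\<bar>" using distZ_attained by blast
    have "distZ x \<le> \<bar>x - real_of_int m\<bar>" by (rule distZ_le)
    then show ?thesis using m by linarith
  qed
  show ?thesis using half[of x y] half[of y x] by linarith
qed

lemma distZ_cont: "continuous_on UNIV distZ"
proof (rule lipschitz_on_continuous_on[where L=1])
  show "1-lipschitz_on UNIV distZ"
    by (rule lipschitz_onI) (auto simp: dist_real_def distZ_lip)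
qed

lemma flow_neg:
  assumes U: "mp_flow M U"
  shows "mp_flow M (\<lambda>t. U (- t))"
proof -
  have [measurable]: "(\<lambda>(t, x). U t x) \<in> measurable (borel \<Otimes>\<^sub>M M) M" using U by (simp add: mp_flow_def)
  have m: "(\<lambda>(t, x). U (- t) x) \<in> measurable (borel \<Otimes>\<^sub>M M) M" by measurable
  have add: "U (s + t) x = U s (U t x)" if "x \<in> space M" for s t x using U that by (simp add: mp_flow_def)
  have add': "U (- (s + t)) x = U (- s) (U (- t) x)" if "x \<in> space M" for s t x
  proof -
    have "U (- (s + t)) x = U (- s + - t) x" by simp
    also have "\<dots> = U (- s) (U (- t) x)" by (rule add[OF that])
    finally show ?thesis .
  qed
  have z: "U 0 x = x" if "x \<in> space M" for x using U that by (simp add: mp_flow_def)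
  have d: "distr M M (U t) = M" for t using U by (simp add: mp_flow_def)
  show ?thesis unfolding mp_flow_def using m add' z d by simp
qed

lemma distZ_split:
  fixes G1 G2 :: "real \<Rightarrow> real"
  shows "G1 (distZ y) = G1 (frac y) * indicator {0..<1/2} (frac y) + G1 (1 - frac y) * indicator {1/2..<1} (frac y)"
proof -
  have d: "distZ y = min (frac y) (1 - frac y)" unfolding distZ_def frac_def by simp
  have f: "0 \<le> frac y" "frac y < 1" by (simp_all add: frac_lt_1)
  show ?thesis
  proof (cases "frac y < 1/2")
    case True
    then show ?thesis using d f by (simp add: indicator_def min_def)
  next
    case False
    then have "min (frac y) (1 - frac y) = 1 - frac y" by auto
    then show ?thesis using d f False by (simp add: indicator_def)
  qed
qed

theorem mainTheorem3:
  shows "continuous_on UNIV distZ \<and>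
    (\<forall>u v :: real. u > 0 \<and> v > 0 \<longrightarrow>
       pointwise_good TYPE('a) (\<lambda>k. distZ (real k * u + v)))"
proof (intro conjI allI impI)
  show "continuous_on UNIV distZ" by (rule distZ_cont)
  fix u v :: real
  show "pointwise_good TYPE('a) (\<lambda>k. distZ (real k * u + v))"
    unfolding pointwise_good_def
  proof (intro allI impI, elim conjE)
    fix M :: "'a measure" and U F
    assume M: "prob_space M" and U: "mp_flow M U" and FL: "F \<in> Linfty M"
    interpret prob_space M by fact
    obtain C where Fm[measurable]: "F \<in> borel_measurable M" and FC: "AE x in M. \<bar>F x\<bar> \<le> C"
      using FL unfolding Linfty_def by blast
    have Utm: "U t \<in> measurable M M" for t by (rule flow_meas[OF U])
    have Us: "U t x \<in> space M" if "x \<in> space M" for t x by (rule measurable_space[OF Utm that])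
    have Uadd: "U (s + t) x = U s (U t x)" if "x \<in> space M" for s t x using U that by (simp add: mp_flow_def)
    have Ud: "distr M M (U t) = M" for t using U by (simp add: mp_flow_def)
    define F' where "F' x = (if \<bar>F x\<bar> \<le> C then F x else 0)" for x
    have F'm[measurable]: "F' \<in> borel_measurable M" unfolding F'_def by measurable
    have F'b: "\<forall>x\<in>space M. \<bar>F' x\<bar> \<le> \<bar>C\<bar>" by (auto simp: F'_def)
    have AEk: "AE x in M. \<forall>k::nat. \<bar>F (U (distZ (real k * u + v)) x)\<bar> \<le> C"
      unfolding AE_all_countable
    proof
      fix k :: nat
      show "AE x in M. \<bar>F (U (distZ (real k * u + v)) x)\<bar> \<le> C"
        by (rule AE_distrD[OF Utm]) (subst Ud, rule FC)
    qed
    define G where "G x = F' (U 1 x)" for x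
    have Gm: "G \<in> borel_measurable M" unfolding G_def using measurable_comp[OF Utm F'm] by (simp add: comp_def)
    have Gb: "\<forall>x\<in>space M. \<bar>G x\<bar> \<le> \<bar>C\<bar>" using F'b Us by (simp add: G_def)
    define \<theta> where "\<theta> k = frac (real k * u + v)" for k :: nat
    have P1: "AE x in M. convergent (\<lambda>n. 1 / real n * (\<Sum>k=1..n. F' (U (\<theta> k) x) * indicator {0..<1/2} (\<theta> k)))"
      using good_piece[OF M U F'm F'b, of u v 0 "1/2"] unfolding \<theta>_def .
    have P2: "AE x in M. convergent (\<lambda>n. 1 / real n * (\<Sum>k=1..n. G (U (- \<theta> k) x) * indicator {1/2..<1} (\<theta> k)))"
      using good_piece[OF M flow_neg[OF U] Gm Gb, of u v "1/2" 1] unfolding \<theta>_def .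
    show "AE x in M. convergent (\<lambda>n. 1 / real n * (\<Sum>k = 1..n. F (U (distZ (real k * u + v)) x)))"
    proof (rule AE_mp[OF AEk], rule AE_mp[OF P1], rule AE_mp[OF P2], rule AE_I2, intro impI)
      fix x assume x: "x \<in> space M"
        and c2: "convergent (\<lambda>n. 1 / real n * (\<Sum>k=1..n. G (U (- \<theta> k) x) * indicator {1/2..<1} (\<theta> k)))"
        and c1: "convergent (\<lambda>n. 1 / real n * (\<Sum>k=1..n. F' (U (\<theta> k) x) * indicator {0..<1/2} (\<theta> k)))"
        and bk: "\<forall>k::nat. \<bar>F (U (distZ (real k * u + v)) x)\<bar> \<le> C"
      have eqk: "F (U (distZ (real k * u + v)) x) =
          F' (U (\<theta> k) x) * indicator {0..<1/2} (\<theta> k) + G (U (- \<theta> k) x) * indicator {1/2..<1} (\<theta> k)" for k :: nat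
      proof -
        have "F (U (distZ (real k * u + v)) x) = F' (U (distZ (real k * u + v)) x)"
          using bk by (simp add: F'_def)
        also have "\<dots> = F' (U (\<theta> k) x) * indicator {0..<1/2} (\<theta> k) + F' (U (1 - \<theta> k) x) * indicator {1/2..<1} (\<theta> k)"
          unfolding \<theta>_def by (rule distZ_split)
        also have "F' (U (1 - \<theta> k) x) = G (U (- \<theta> k) x)"
          unfolding G_def using Uadd[OF x, of 1 "- \<theta> k"] by simp
        finally show ?thesis .
      qed
      have "(\<lambda>n. 1 / real n * (\<Sum>k = 1..n. F (U (distZ (real k * u + v)) x))) =
          (\<lambda>n. 1 / real n * (\<Sum>k=1..n. F' (U (\<theta> k) x) * indicator {0..<1/2} (\<theta> k)) +
               1 / real n * (\<Sum>k=1..n. G (U (- \<theta> k) x) * indicator {1/2..<1} (\<theta> k)))"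
        by (rule ext) (simp add: eqk sum.distrib distrib_left)
      then show "convergent (\<lambda>n. 1 / real n * (\<Sum>k = 1..n. F (U (distZ (real k * u + v)) x)))"
        using convergent_add[OF c1 c2] by simp
    qed
  qed
qed


end
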